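(* For every integer $R\ge1$, $$\pi-\Vert T_R\Vert=\inf_{\phi\in E(R)}\int_0^{2\pi}x\,|\phi(x)|^2\,dx,$$ where $E(R)$ is the set of functions $\phi(x)=\frac{1}{\sqrt{2\pi}}\sum_{n=1}^R u_ne^{i(n-1)x}$ with $\mathbf{u}\in\mathbb{C}^R$, $\sum_{n=1}^R|u_n|^2=1$.
   Context: $T_R$ is the $R\times R$ matrix with $(T_R)_{m,n}=0$ if $m=n$ and $(T_R)_{m,n}=\frac{1}{m-n}$ if $m\ne n$, $1\le m,n\le R$. $\Vert\cdot\Vert$ is the operator norm induced by the Euclidean norm. *)

theory Defs
  imports "HOL-Analysis.Analysis"
begin

definition Tmat :: "nat \<Rightarrow> nat \<Rightarrow> real" where
  "Tmat m n = (if m = n then 0 else 1 / (real m - real n))"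

definition vnorm :: "nat \<Rightarrow> (nat \<Rightarrow> complex) \<Rightarrow> real" where
  "vnorm R u = sqrt (\<Sum>n=1..R. (cmod (u n))\<^sup>2)"

definition T_opnorm :: "nat \<Rightarrow> real" where
  "T_opnorm R = Sup {vnorm R (\<lambda>m. \<Sum>n=1..R. complex_of_real (Tmat m n) * u n) | u. vnorm R u = 1}"

definition E :: "nat \<Rightarrow> (real \<Rightarrow> complex) set" where
  "E R = {\<phi>. \<exists>u :: nat \<Rightarrow> complex. (\<Sum>n=1..R. (cmod (u n))\<^sup>2) = 1 \<and>
      \<phi> = (\<lambda>x. complex_of_real (1 / sqrt (2 * pi)) *
               (\<Sum>n=1..R. u n * exp (\<i> * complex_of_real (real (n - 1) * x))))}"

end

theory Submission
  imports Defs
begin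

lemma integral_K:
  fixes d :: real
  assumes "d \<in> \<int>"
  shows "((\<lambda>x. complex_of_real x * exp (\<i> * complex_of_real (d * x))) has_integral
     (if d = 0 then complex_of_real (2 * pi^2) else - 2 * pi * \<i> / complex_of_real d)) {0..2*pi}"
proof (cases "d = 0")
  case True
  have dz: "((\<lambda>z. z^2/2) has_field_derivative z) (at z)" for z :: complex
    by (auto intro!: derivative_eq_intros)
  have "((\<lambda>x. complex_of_real x) has_integral ((\<lambda>x. (complex_of_real x)^2/2) (2*pi) - (\<lambda>x. (complex_of_real x)^2/2) 0)) {0..2*pi}"
    apply (rule fundamental_theorem_of_calculus)
     apply simp
    apply (rule has_vector_derivative_real_field[OF dz])
    done
  then show ?thesis using True by (simp add: power2_eq_square)
next
  case False
  define D where "D = complex_of_real d"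
  have D0: "D \<noteq> 0" using False by (simp add: D_def)
  define g where "g = (\<lambda>z. z * exp (\<i>*D*z) / (\<i>*D) + exp (\<i>*D*z) / D^2)"
  have deriv: "(g has_field_derivative z * exp (\<i>*D*z)) (at z)" for z
    unfolding g_def using D0
    by (auto intro!: derivative_eq_intros simp: field_simps power2_eq_square)
  have "((\<lambda>x. complex_of_real x * exp (\<i>*D*complex_of_real x)) has_integral (g (complex_of_real (2*pi)) - g (complex_of_real 0))) {0..2*pi}"
    apply (rule fundamental_theorem_of_calculus)
     apply simp
    apply (rule has_vector_derivative_real_field[OF deriv])
    done
  moreover have e1: "exp (\<i>*D*complex_of_real (2*pi)) = 1"
  proof -
    obtain k where k: "d = of_int k" using assms Ints_cases by blast
    have "\<i>*D*complex_of_real (2*pi) = complex_of_real (2 * real_of_int k * pi) * \<i>" by (simp add: D_def k)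
    then show ?thesis using exp_integer_2pi[of "real_of_int k"] by (simp add: mult_ac)
  qed
  moreover have "g (complex_of_real (2*pi)) - g (complex_of_real 0) = - 2 * pi * \<i> / D"
  proof -
    have "g (complex_of_real (2*pi)) - g (complex_of_real 0) = complex_of_real (2*pi) / (\<i>*D)"
      using e1 D0 by (simp add: g_def)
    also have "\<dots> = - 2 * pi * \<i> / D" using D0 by (simp add: field_simps)
    finally show ?thesis .
  qed
  ultimately have "((\<lambda>x. complex_of_real x * exp (\<i>*D*complex_of_real x)) has_integral (- 2 * pi * \<i> / D)) {0..2*pi}"
    by simp
  then show ?thesis using False by (simp add: D_def mult.assoc)
qed


definition Tv :: "nat \<Rightarrow> (nat \<Rightarrow> complex) \<Rightarrow> nat \<Rightarrow> complex" where
  "Tv R u m = (\<Sum>n=1..R. complex_of_real (Tmat m n) * u n)"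
definition Q :: "nat \<Rightarrow> (nat \<Rightarrow> complex) \<Rightarrow> (nat \<Rightarrow> complex) \<Rightarrow> complex" where
  "Q R x y = (\<Sum>m=1..R. cnj (x m) * Tv R y m)"
definition P :: "nat \<Rightarrow> (nat \<Rightarrow> complex) \<Rightarrow> real" where
  "P R u = Im (Q R u u)"
definition nsq :: "nat \<Rightarrow> (nat \<Rightarrow> complex) \<Rightarrow> real" where
  "nsq R u = (\<Sum>m=1..R. (cmod (u m))\<^sup>2)"

lemma Tmat_anti: "Tmat n m = - Tmat m n"
  by (simp add: Tmat_def divide_simps)

lemma Tmat_diag[simp]: "Tmat m m = 0"
  by (simp add: Tmat_def)

lemma Q_swap: "Q R y x = - cnj (Q R x y)"
proof -
  have "cnj (Q R x y) = (\<Sum>m=1..R. \<Sum>n=1..R. x m * complex_of_real (Tmat m n) * cnj (y n))"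
    by (simp add: Q_def Tv_def cnj_sum sum_distrib_left mult_ac)
  also have "\<dots> = (\<Sum>n=1..R. \<Sum>m=1..R. x m * complex_of_real (Tmat m n) * cnj (y n))"
    by (rule sum.swap)
  also have "\<dots> = - (\<Sum>n=1..R. \<Sum>m=1..R. cnj (y n) * (complex_of_real (Tmat n m) * x m))"
    unfolding sum_negf[symmetric]
  proof (intro sum.cong refl)
    fix n m
    show "x m * complex_of_real (Tmat m n) * cnj (y n) = - (cnj (y n) * (complex_of_real (Tmat n m) * x m))"
      by (simp add: Tmat_anti[of n m])
  qed
  also have "\<dots> = - Q R y x"
    by (simp add: Q_def Tv_def sum_distrib_left)
  finally show ?thesis by simp
qed

lemma Tv_add: "Tv R (\<lambda>m. x m + y m) = (\<lambda>m. Tv R x m + Tv R y m)"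
  by (auto simp: Tv_def distrib_left sum.distrib)
lemma Tv_diff: "Tv R (\<lambda>m. x m - y m) = (\<lambda>m. Tv R x m - Tv R y m)"
  by (auto simp: Tv_def right_diff_distrib sum_subtractf)
lemma Tv_scale: "Tv R (\<lambda>m. c * x m) = (\<lambda>m. c * Tv R x m)"
  by (auto simp: Tv_def sum_distrib_left mult_ac)

lemma Q_add: "Q R (\<lambda>m. x m + y m) (\<lambda>m. x m + y m) = Q R x x + Q R x y + Q R y x + Q R y y"
  by (simp add: Q_def Tv_add algebra_simps sum.distrib)
lemma Q_diff: "Q R (\<lambda>m. x m - y m) (\<lambda>m. x m - y m) = Q R x x - Q R x y - Q R y x + Q R y y"
  by (simp add: Q_def Tv_diff algebra_simps sum.distrib sum_subtractf)

lemma P_polar: "4 * Im (Q R x y) = P R (\<lambda>m. x m + y m) - P R (\<lambda>m. x m - y m)"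
  unfolding P_def Q_add Q_diff using Q_swap[of R x y] by simp

lemma Q_cnj: "Q R (\<lambda>m. cnj (x m)) (\<lambda>m. cnj (x m)) = cnj (Q R x x)"
  by (simp add: Q_def Tv_def cnj_sum)

lemma P_cnj: "P R (\<lambda>m. cnj (x m)) = - P R x"
  by (simp add: P_def Q_cnj)

lemma P_scale: "P R (\<lambda>m. complex_of_real r * x m) = r^2 * P R x"
proof -
  have "Q R (\<lambda>m. complex_of_real r * x m) (\<lambda>m. complex_of_real r * x m) = complex_of_real (r^2) * Q R x x"
    by (simp add: Q_def Tv_scale sum_distrib_left power2_eq_square mult_ac)
  then show ?thesis by (simp add: P_def)
qed

lemma nsq_scale: "nsq R (\<lambda>m. c * x m) = (cmod c)^2 * nsq R x"
  by (simp add: nsq_def sum_distrib_left norm_mult power_mult_distrib)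

lemma nsq_cnj: "nsq R (\<lambda>m. cnj (x m)) = nsq R x"
  by (simp add: nsq_def)

lemma nsq_nonneg: "nsq R x \<ge> 0"
  by (simp add: nsq_def sum_nonneg)

lemma nsq_parallel: "nsq R (\<lambda>m. x m + y m) + nsq R (\<lambda>m. x m - y m) = 2 * nsq R x + 2 * nsq R y"
proof -
  have "(cmod (a + b))^2 + (cmod (a - b))^2 = 2 * (cmod a)^2 + 2 * (cmod b)^2" for a b :: complex
  proof -
    have e: "(cmod z)^2 = Re z * Re z + Im z * Im z" for z using cmod_power2[of z] by (simp add: power2_eq_square)
    show ?thesis unfolding e by (simp add: algebra_simps)
  qed
  then show ?thesis by (simp add: nsq_def sum.distrib[symmetric] sum_distrib_left)
qed

lemma P_zero: assumes "nsq R z = 0" shows "P R z = 0"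
proof -
  have "\<forall>m\<in>{1..R}. (cmod (z m))^2 = 0"
    using assms unfolding nsq_def by (subst sum_nonneg_eq_0_iff[symmetric]) auto
  then have "Q R z z = 0" by (simp add: Q_def)
  then show ?thesis by (simp add: P_def)
qed

lemma P_bound_hom:
  assumes "\<And>v. nsq R v = 1 \<Longrightarrow> P R v \<le> S"
  shows "P R z \<le> S * nsq R z"
proof (cases "nsq R z = 0")
  case True then show ?thesis using P_zero by simp
next
  case False
  then have pos: "nsq R z > 0" using nsq_nonneg[of R z] by simp
  define r where "r = 1 / sqrt (nsq R z)"
  have r2: "r^2 * nsq R z = 1" using pos by (simp add: r_def power_divide)
  have "nsq R (\<lambda>m. complex_of_real r * z m) = 1" using r2 by (simp add: nsq_scale)
  then have "r^2 * P R z \<le> S" using assms P_scale by metis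
  then have "r^2 * P R z * nsq R z \<le> S * nsq R z" using pos by (simp add: mult_right_mono)
  then show ?thesis using r2 by (simp add: algebra_simps)
qed

lemma polarization:
  assumes S: "\<And>v. nsq R v = 1 \<Longrightarrow> P R v \<le> S" and u: "nsq R u = 1"
  shows "sqrt (nsq R (Tv R u)) \<le> S"
proof -
  have up: "P R z \<le> S * nsq R z" for z using P_bound_hom[OF S] .
  have lo: "- P R z \<le> S * nsq R z" for z using up[of "\<lambda>m. cnj (z m)"] by (simp add: P_cnj nsq_cnj)
  have S0: "S \<ge> 0" using up[of u] lo[of u] u by simp
  define t where "t = sqrt (nsq R (Tv R u))"
  show ?thesis
  proof (cases "t = 0")
    case True then show ?thesis using S0 by (simp add: t_def)
  next
    case False
    have tpos: "t > 0" using False nsq_nonneg[of R "Tv R u"] by (simp add: t_def)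
    have tt: "t^2 = nsq R (Tv R u)" using nsq_nonneg[of R "Tv R u"] by (simp add: t_def)
    define y where "y = (\<lambda>m. - \<i> * complex_of_real (1/t) * Tv R u m)"
    have ny: "nsq R y = 1"
    proof -
      have "nsq R y = (cmod (- \<i> * complex_of_real (1/t)))^2 * nsq R (Tv R u)"
        unfolding y_def by (subst nsq_scale[symmetric]) (simp add: mult.assoc)
      also have "\<dots> = 1" using tpos tt[symmetric] by (simp add: norm_mult norm_divide power_divide)
      finally show ?thesis .
    qed
    have "Q R y u = \<i> * complex_of_real (1/t) * (\<Sum>m=1..R. cnj (Tv R u m) * Tv R u m)"
      by (simp add: Q_def y_def sum_distrib_left mult_ac)
    also have "(\<Sum>m=1..R. cnj (Tv R u m) * Tv R u m) = complex_of_real (nsq R (Tv R u))"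
      by (simp add: nsq_def complex_norm_square mult.commute del: of_real_power)
    finally have "Im (Q R y u) = t" using tt[symmetric] tpos by (simp add: power2_eq_square)
    then have "4 * t = P R (\<lambda>m. y m + u m) - P R (\<lambda>m. y m - u m)" using P_polar[of R y u] by simp
    also have "\<dots> \<le> S * nsq R (\<lambda>m. y m + u m) + S * nsq R (\<lambda>m. y m - u m)"
      using up[of "\<lambda>m. y m + u m"] lo[of "\<lambda>m. y m - u m"] by linarith
    also have "\<dots> = S * (nsq R (\<lambda>m. y m + u m) + nsq R (\<lambda>m. y m - u m))" by (simp add: algebra_simps)
    also have "\<dots> = S * 4" using nsq_parallel[of R y u] ny u by simp
    finally show ?thesis by (simp add: t_def)
  qed
qed


lemma exp_prod:
  assumes "m \<ge> 1" "n \<ge> 1"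
  shows "exp (\<i> * complex_of_real (real (m - 1) * x)) * cnj (exp (\<i> * complex_of_real (real (n - 1) * x)))
     = exp (\<i> * complex_of_real ((real m - real n) * x))"
proof -
  have "exp (\<i> * complex_of_real (real (m - 1) * x)) * cnj (exp (\<i> * complex_of_real (real (n - 1) * x)))
      = exp (\<i> * complex_of_real (real (m - 1) * x) + (- \<i>) * complex_of_real (real (n - 1) * x))"
    by (simp add: exp_cnj exp_add[symmetric])
  also have "\<i> * complex_of_real (real (m - 1) * x) + (- \<i>) * complex_of_real (real (n - 1) * x)
      = \<i> * complex_of_real ((real m - real n) * x)"
    using assms by (simp add: of_nat_diff algebra_simps)
  finally show ?thesis .
qed

lemma integrand_expand:
  fixes u :: "nat \<Rightarrow> complex"
  defines "c \<equiv> complex_of_real (1 / sqrt (2 * pi))"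
  shows "complex_of_real (x * (cmod (c * (\<Sum>n=1..R. u n * exp (\<i> * complex_of_real (real (n - 1) * x)))))\<^sup>2)
    = (\<Sum>m=1..R. \<Sum>n=1..R. (c * c * u m * cnj (u n)) * (complex_of_real x * exp (\<i> * complex_of_real ((real m - real n) * x))))"
proof -
  let ?s = "\<Sum>n=1..R. u n * exp (\<i> * complex_of_real (real (n - 1) * x))"
  have cc: "cnj c = c" by (simp add: c_def)
  have "complex_of_real (x * (cmod (c * ?s))\<^sup>2) = complex_of_real x * ((c * ?s) * cnj (c * ?s))"
    by (simp only: of_real_mult complex_norm_square)
  also have "(c * ?s) * cnj (c * ?s) = c * c * (?s * cnj ?s)" using cc by (simp add: mult_ac)
  also have "?s * cnj ?s = (\<Sum>m=1..R. \<Sum>n=1..R. (u m * exp (\<i> * complex_of_real (real (m - 1) * x))) * (cnj (u n) * cnj (exp (\<i> * complex_of_real (real (n - 1) * x)))))"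
    by (simp add: cnj_sum sum_product)
  also have "\<dots> = (\<Sum>m=1..R. \<Sum>n=1..R. u m * cnj (u n) * exp (\<i> * complex_of_real ((real m - real n) * x)))"
  proof (intro sum.cong refl)
    fix m n assume "m \<in> {1..R}" "n \<in> {1..R}"
    then show "u m * exp (\<i> * complex_of_real (real (m - 1) * x)) * (cnj (u n) * cnj (exp (\<i> * complex_of_real (real (n - 1) * x))))
      = u m * cnj (u n) * exp (\<i> * complex_of_real ((real m - real n) * x))"
      using exp_prod[of m n x] by (simp add: mult_ac)
  qed
  finally show ?thesis by (simp add: sum_distrib_left mult_ac)
qed

lemma term_value:
  assumes "m \<ge> 1" "n \<ge> 1"
  shows "complex_of_real (1 / sqrt (2 * pi)) * complex_of_real (1 / sqrt (2 * pi)) *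
     (if real m - real n = 0 then complex_of_real (2 * pi^2) else - 2 * pi * \<i> / complex_of_real (real m - real n))
   = complex_of_real pi * (if m = n then 1 else 0) + (- \<i>) * complex_of_real (Tmat m n)"
proof -
  have c2: "complex_of_real (1 / sqrt (2 * pi)) * complex_of_real (1 / sqrt (2 * pi)) = complex_of_real (1 / (2*pi))"
    by (simp flip: of_real_mult)
  show ?thesis
  proof (cases "m = n")
    case True then show ?thesis unfolding c2 by (simp add: power2_eq_square)
  next
    case False
    then have d: "real m - real n \<noteq> 0" by simp
    have "complex_of_real (1 / (2*pi)) * (- 2 * pi * \<i> / complex_of_real (real m - real n)) = - \<i> * complex_of_real (1 / (real m - real n))"
      using d by (simp add: field_simps)
    then show ?thesis unfolding c2 using False d by (simp add: Tmat_def)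
  qed
qed

lemma integral_phi:
  assumes u: "nsq R u = 1"
  shows "integral {0..2*pi} (\<lambda>x. x * (cmod (complex_of_real (1 / sqrt (2 * pi)) *
               (\<Sum>n=1..R. u n * exp (\<i> * complex_of_real (real (n - 1) * x)))))\<^sup>2) = pi - P R u"
proof -
  define c where "c = complex_of_real (1 / sqrt (2 * pi))"
  define I where "I = (\<lambda>m n::nat. if real m - real n = 0 then complex_of_real (2 * pi^2) else - 2 * pi * \<i> / complex_of_real (real m - real n))"
  define J where "J = (\<Sum>m=1..R. \<Sum>n=1..R. (c * c * u m * cnj (u n)) * I m n)"
  have hi: "((\<lambda>x. complex_of_real (x * (cmod (c * (\<Sum>n=1..R. u n * exp (\<i> * complex_of_real (real (n - 1) * x)))))\<^sup>2)) has_integral J) {0..2*pi}"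
    unfolding integrand_expand[where R=R and u=u, folded c_def] J_def
  proof (intro has_integral_sum finite_atLeastAtMost has_integral_mult_right)
    fix m n assume "m \<in> {1..R}" "n \<in> {1..R}"
    have "real m - real n \<in> \<int>" by simp
    from integral_K[OF this] show "((\<lambda>x. complex_of_real x * exp (\<i> * complex_of_real ((real m - real n) * x))) has_integral I m n) {0..2 * pi}"
      unfolding I_def .
  qed
  have J: "J = complex_of_real pi * complex_of_real (nsq R u) + (- \<i>) * cnj (Q R u u)"
  proof -
    have "J = (\<Sum>m=1..R. \<Sum>n=1..R. u m * cnj (u n) * (complex_of_real pi * (if m = n then 1 else 0) + (- \<i>) * complex_of_real (Tmat m n)))"
      unfolding J_def
    proof (intro sum.cong refl)
      fix m n assume "m \<in> {1..R}" "n \<in> {1..R}"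
      then show "c * c * u m * cnj (u n) * I m n = u m * cnj (u n) * (complex_of_real pi * (if m = n then 1 else 0) + (- \<i>) * complex_of_real (Tmat m n))"
      proof -
        have eq: "c * c * u m * cnj (u n) * I m n = u m * cnj (u n) * (c * c * I m n)" by (simp only: mult_ac)
        have tv: "c * c * I m n = complex_of_real pi * (if m = n then 1 else 0) + (- \<i>) * complex_of_real (Tmat m n)"
          unfolding c_def I_def using \<open>m \<in> {1..R}\<close> \<open>n \<in> {1..R}\<close> by (intro term_value) auto
        show ?thesis by (simp only: eq tv)
      qed
    qed
    also have "\<dots> = complex_of_real pi * (\<Sum>m=1..R. u m * cnj (u m)) + (- \<i>) * (\<Sum>m=1..R. \<Sum>n=1..R. u m * complex_of_real (Tmat m n) * cnj (u n))"
    proof -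
      have "(\<Sum>m=1..R. \<Sum>n=1..R. u m * cnj (u n) * (complex_of_real pi * (if m = n then 1 else 0) + (- \<i>) * complex_of_real (Tmat m n)))
        = (\<Sum>m=1..R. (\<Sum>n=1..R. if m = n then complex_of_real pi * (u m * cnj (u m)) else 0) + (\<Sum>n=1..R. (- \<i>) * (u m * complex_of_real (Tmat m n) * cnj (u n))))"
        by (simp only: sum.distrib[symmetric]) (intro sum.cong refl, auto simp: algebra_simps)
      also have "\<dots> = (\<Sum>m=1..R. complex_of_real pi * (u m * cnj (u m)) + (- \<i>) * (\<Sum>n=1..R. u m * complex_of_real (Tmat m n) * cnj (u n)))"
        by (intro sum.cong refl) (simp add: sum_distrib_left)
      finally show ?thesis by (simp only: sum.distrib sum_distrib_left)
    qed
    also have "(\<Sum>m=1..R. u m * cnj (u m)) = complex_of_real (nsq R u)"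
      by (simp add: nsq_def complex_norm_square del: of_real_power)
    also have "(\<Sum>m=1..R. \<Sum>n=1..R. u m * complex_of_real (Tmat m n) * cnj (u n)) = cnj (Q R u u)"
      by (simp add: Q_def Tv_def cnj_sum sum_distrib_left mult_ac)
    finally show ?thesis .
  qed
  have "Re J = pi - P R u" unfolding J using u by (simp add: P_def)
  with has_integral_Re[OF hi] show ?thesis unfolding c_def by (simp add: integral_unique)
qed


lemma cmod_le1: assumes "nsq R u = 1" "m \<in> {1..R}" shows "cmod (u m) \<le> 1"
proof -
  have "(cmod (u m))^2 \<le> nsq R u" unfolding nsq_def
    by (rule member_le_sum) (use assms in auto)
  then have "(cmod (u m))^2 \<le> 1" using assms by simp
  then show ?thesis by (simp add: abs_square_le_1)
qed

lemma Q_le: "cmod (Q R u u) \<le> (\<Sum>m=1..R. cmod (u m) * cmod (Tv R u m))"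
  unfolding Q_def by (rule order_trans[OF norm_sum]) (simp add: norm_mult)

lemma P_le_Tv: assumes "nsq R u = 1" shows "P R u \<le> sqrt (nsq R (Tv R u))"
proof -
  have "(\<Sum>m=1..R. cmod (u m) * cmod (Tv R u m))^2 \<le> (\<Sum>m=1..R. (cmod (u m))^2) * (\<Sum>m=1..R. (cmod (Tv R u m))^2)"
    by (rule Cauchy_Schwarz_ineq_sum)
  then have "(\<Sum>m=1..R. cmod (u m) * cmod (Tv R u m))^2 \<le> nsq R (Tv R u)"
    using assms by (simp add: nsq_def)
  then have "(\<Sum>m=1..R. cmod (u m) * cmod (Tv R u m)) \<le> sqrt (nsq R (Tv R u))"
    by (rule real_le_rsqrt)
  moreover have "P R u \<le> cmod (Q R u u)" unfolding P_def
    using abs_Im_le_cmod[of "Q R u u"] by linarith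
  ultimately show ?thesis using Q_le[of R u] by linarith
qed

lemma P_crude: assumes "nsq R u = 1" shows "P R u \<le> (\<Sum>m=1..R. \<Sum>n=1..R. \<bar>Tmat m n\<bar>)"
proof -
  have "P R u \<le> cmod (Q R u u)" unfolding P_def
    using abs_Im_le_cmod[of "Q R u u"] by linarith
  also have "\<dots> \<le> (\<Sum>m=1..R. cmod (u m) * cmod (Tv R u m))" by (rule Q_le)
  also have "\<dots> \<le> (\<Sum>m=1..R. \<Sum>n=1..R. \<bar>Tmat m n\<bar>)"
  proof (rule sum_mono)
    fix m assume m: "m \<in> {1..R}"
    have "cmod (Tv R u m) \<le> (\<Sum>n=1..R. cmod (complex_of_real (Tmat m n) * u n))"
      unfolding Tv_def by (rule norm_sum)
    also have "\<dots> \<le> (\<Sum>n=1..R. \<bar>Tmat m n\<bar>)"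
    proof (rule sum_mono)
      fix n assume "n \<in> {1..R}"
      then have "cmod (u n) \<le> 1" using cmod_le1[OF assms] by blast
      then show "cmod (complex_of_real (Tmat m n) * u n) \<le> \<bar>Tmat m n\<bar>"
        by (simp add: norm_mult mult_left_le)
    qed
    finally have a: "cmod (Tv R u m) \<le> (\<Sum>n=1..R. \<bar>Tmat m n\<bar>)" .
    have "cmod (u m) * cmod (Tv R u m) \<le> 1 * cmod (Tv R u m)"
      by (rule mult_right_mono) (use cmod_le1[OF assms m] in auto)
    then show "cmod (u m) * cmod (Tv R u m) \<le> (\<Sum>n=1..R. \<bar>Tmat m n\<bar>)" using a by linarith
  qed
  finally show ?thesis .
qed

theorem mainTheorem15:
  fixes R :: nat
  assumes "R \<ge> 1"
  shows "pi - T_opnorm R =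
    Inf ((\<lambda>\<phi>. integral {0..2*pi} (\<lambda>x. x * (cmod (\<phi> x))\<^sup>2)) ` E R)"
proof -
  define NS where "NS = {sqrt (nsq R (Tv R u)) | u. nsq R u = 1}"
  have vn: "vnorm R w = sqrt (nsq R w)" for w by (simp add: vnorm_def nsq_def)
  have vn1: "vnorm R w = 1 \<longleftrightarrow> nsq R w = 1" for w by (simp add: vn)
  have TvE: "(\<lambda>m. \<Sum>n=1..R. complex_of_real (Tmat m n) * u n) = Tv R u" for u
    by (simp add: Tv_def fun_eq_iff)
  have opn: "T_opnorm R = Sup NS"
    unfolding T_opnorm_def NS_def vn1 TvE by (simp add: vn)
  define e1 where "e1 = (\<lambda>m::nat. if m = 1 then (1::complex) else 0)"
  have ne1: "nsq R e1 = 1" using assms by (simp add: nsq_def e1_def if_distrib[of "\<lambda>z. (cmod z)^2"] cong: if_cong)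
  have NSne: "NS \<noteq> {}" using ne1 unfolding NS_def by blast
  have NSbdd: "bdd_above NS"
  proof -
    have "\<forall>x\<in>NS. x \<le> (\<Sum>m=1..R. \<Sum>n=1..R. \<bar>Tmat m n\<bar>)"
      unfolding NS_def using polarization[OF P_crude] by blast
    then show ?thesis by (auto intro: bdd_aboveI)
  qed
  define phi where "phi = (\<lambda>u::nat\<Rightarrow>complex. \<lambda>x. complex_of_real (1 / sqrt (2 * pi)) *
               (\<Sum>n=1..R. u n * exp (\<i> * complex_of_real (real (n - 1) * x))))"
  have ER: "E R = phi ` {u. nsq R u = 1}"
    unfolding E_def phi_def nsq_def by auto
  have ival: "integral {0..2*pi} (\<lambda>x. x * (cmod (phi u x))\<^sup>2) = pi - P R u" if "nsq R u = 1" for u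
    unfolding phi_def using integral_phi[OF that] .
  let ?A = "(\<lambda>\<phi>. integral {0..2*pi} (\<lambda>x. x * (cmod (\<phi> x))\<^sup>2)) ` E R"
  have A: "?A = (\<lambda>u. pi - P R u) ` {u. nsq R u = 1}"
    unfolding ER image_image using ival by (auto intro!: image_cong)
  show ?thesis
    unfolding A opn
  proof (rule cInf_eq_non_empty[symmetric])
    show "(\<lambda>u. pi - P R u) ` {u. nsq R u = 1} \<noteq> {}" using ne1 by blast
  next
    fix x assume "x \<in> (\<lambda>u. pi - P R u) ` {u. nsq R u = 1}"
    then obtain u where u: "nsq R u = 1" "x = pi - P R u" by blast
    have "sqrt (nsq R (Tv R u)) \<in> NS" unfolding NS_def using u by blast
    then have "sqrt (nsq R (Tv R u)) \<le> Sup NS" using NSbdd by (rule cSup_upper)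
    then show "pi - Sup NS \<le> x" using P_le_Tv[OF u(1)] u(2) by linarith
  next
    fix y assume H: "\<And>x. x \<in> (\<lambda>u. pi - P R u) ` {u. nsq R u = 1} \<Longrightarrow> y \<le> x"
    have S: "P R v \<le> pi - y" if "nsq R v = 1" for v using H[of "pi - P R v"] that by auto
    have "Sup NS \<le> pi - y"
      using NSne by (rule cSup_least) (auto simp: NS_def intro: polarization[OF S])
    then show "y \<le> pi - Sup NS" by linarith
  qed
qed

end
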